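(* Let $A\in\mathbb{R}^{m\times n}$ with $m>n$ be a full-rank standardized matrix with no two distinct rows parallel, let $x\in\mathbb{R}^n$, and let $b=Ax$. Let $x_{k-1}$ be the $(k-1)$-st iterate of the two-subspace Kaczmarz method, and let $x_k$ be the next iterate. Then, conditionally on $x_{k-1}$, $$\mathbb{E}\|x-x_k\|_2^2\le\left(1-\frac1R\right)^2\|x-x_{k-1}\|_2^2-\frac{1}{m^2-m}\sum_{r<s}C_{r,s}^2\left(\langle x-x_{k-1},a_r\rangle^2+\langle x-x_{k-1},a_s\rangle^2\right),$$ where $\mu_{r,s}=\langle a_r,a_s\rangle$ and $C_{r,s}=\frac{|\mu_{r,s}|-\mu_{r,s}^2}{\sqrt{1-\mu_{r,s}^2}}$.
   Context: $A\in\mathbb{R}^{m\times n}$ has rows $a_1,\dots,a_m$. It is called standardized if $\|a_i\|_2=1$ for all $i$. "No two distinct rows parallel" means $|\langle a_r,a_s\rangle|<1$ for all $r\ne s$. Two-subspace Kaczmarz method for $(A,b)$, $b\in\mathbb{R}^m$: start from $x_0\in\mathbb{R}^n$. For $k=1,2,\dots$, choose an ordered pair $(r,s)$ of distinct indices in $\{1,\dots,m\}$ uniformly at random among the $m^2-m$ such pairs, independently of all previous choices. Then set $\mu_k=\langle a_r,a_s\rangle$, $y_k=x_{k-1}+(b_s-\langle x_{k-1},a_s\rangle)a_s$, $v_k=\frac{a_r-\mu_k a_s}{\sqrt{1-\mu_k^2}}$, $\beta_k=\frac{b_r-b_s\mu_k}{\sqrt{1-\mu_k^2}}$, and $x_k=y_k+(\beta_k-\langle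 y_k,v_k\rangle)v_k$. Scaled condition number: $R=\|A\|_F^2\|A^{-1}\|^2$, where $\|A^{-1}\|=\inf\{M: M\|Az\|_2\ge\|z\|_2\ \text{for all } z\}$, i.e. the reciprocal of the smallest singular value of $A$. *)

theory Defs
  imports "HOL-Analysis.Analysis" "HOL-Probability.Probability"
begin

definition frob_sq :: "real^'n^'m \<Rightarrow> real" where
  "frob_sq A = (\<Sum>i\<in>UNIV. \<Sum>j\<in>UNIV. (A $ i $ j)^2)"

definition inv_norm :: "real^'n^'m \<Rightarrow> real" where
  "inv_norm A = Inf {M. \<forall>z. M * norm (A *v z) \<ge> norm z}"

definition scaled_cond :: "real^'n^'m \<Rightarrow> real" where
  "scaled_cond A = frob_sq A * (inv_norm A)^2"

definition tsk_step :: "real^'n^'m \<Rightarrow> real^'m \<Rightarrow> real^'n \<Rightarrow> 'm \<Rightarrow> 'm \<Rightarrow> real^'n" where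
  "tsk_step A b xp r s =
    (let mu = inner (A $ r) (A $ s);
         y = xp + (b $ s - inner xp (A $ s)) *\<^sub>R (A $ s);
         v = (1 / sqrt (1 - mu^2)) *\<^sub>R (A $ r - mu *\<^sub>R (A $ s));
         beta = (b $ r - b $ s * mu) / sqrt (1 - mu^2)
     in y + (beta - inner y v) *\<^sub>R v)"

definition Ccoef :: "real^'n^'m \<Rightarrow> 'm \<Rightarrow> 'm \<Rightarrow> real" where
  "Ccoef A r s = (let mu = inner (A $ r) (A $ s) in (\<bar>mu\<bar> - mu^2) / sqrt (1 - mu^2))"

end

theory Submission imports Defs begin

lemma step_gen:
  fixes u w x xp :: "'a::real_inner"
  assumes nu: "norm u = 1" and nw: "norm w = 1" and mu1: "\<bar>inner u w\<bar> < 1"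
  shows "norm (x - (let mu = inner u w;
         y = xp + (inner w x - inner xp w) *\<^sub>R w;
         v = (1 / sqrt (1 - mu^2)) *\<^sub>R (u - mu *\<^sub>R w);
         beta = (inner u x - inner w x * mu) / sqrt (1 - mu^2)
     in y + (beta - inner y v) *\<^sub>R v))^2
   = norm (x - xp)^2 - (inner (x - xp) w)^2
     - (inner (x - xp) u - inner u w * inner (x - xp) w)^2 / (1 - (inner u w)^2)"
proof -
  define mu where "mu = inner u w"
  define q where "q = sqrt (1 - mu^2)"
  define e where "e = x - xp"
  define be where "be = inner e w"
  define al where "al = inner e u"
  define y where "y = xp + (inner w x - inner xp w) *\<^sub>R w"
  define v where "v = (1 / q) *\<^sub>R (u - mu *\<^sub>R w)"
  have m2: "mu^2 < 1" using mu1 unfolding mu_def by (simp add: abs_square_less_1)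
  have qpos: "q > 0" using m2 unfolding q_def by simp
  have q2: "q^2 = 1 - mu^2" using m2 unfolding q_def by simp
  have uu: "inner u u = 1" using nu by (simp add: dot_square_norm)
  have ww: "inner w w = 1" using nw by (simp add: dot_square_norm)
  have wu: "inner w u = mu" by (simp add: mu_def inner_commute)
  have xy: "x - y = e - be *\<^sub>R w"
    unfolding y_def e_def be_def by (simp add: inner_diff_left inner_commute algebra_simps)
  have vv: "inner v v = 1"
  proof -
    have "inner v v = (1/q^2) * (inner u u - 2*mu*inner u w + mu^2 * inner w w)"
      unfolding v_def by (simp add: inner_diff_left inner_diff_right wu mu_def[symmetric] power2_eq_square algebra_simps)
    also have "\<dots> = 1" using uu ww qpos q2 by (simp add: mu_def[symmetric] field_simps power2_eq_square)
    finally show ?thesis .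
  qed
  have wv: "inner w v = 0"
    unfolding v_def by (simp add: inner_diff_right ww wu)
  have ev: "inner e v = (al - mu*be) / q"
    unfolding v_def al_def be_def by (simp add: inner_diff_right inner_commute divide_simps)
  have beta: "(inner u x - inner w x * mu) / q = inner x v"
    unfolding v_def by (simp add: inner_diff_right inner_diff_left inner_commute divide_simps algebra_simps)
  have c: "(inner u x - inner w x * mu) / q - inner y v = (al - mu*be)/q"
  proof -
    have "inner x v - inner y v = inner (x - y) v" by (simp add: inner_diff_left)
    also have "\<dots> = inner e v" using xy wv by (simp add: inner_diff_left)
    finally show ?thesis using beta ev by simp
  qed
  have "x - (y + ((inner u x - inner w x * mu) / q - inner y v) *\<^sub>R v) = (e - be *\<^sub>R w) - ((al - mu*be)/q) *\<^sub>R v"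
    using c xy by (simp add: algebra_simps)
  hence "norm (x - (y + ((inner u x - inner w x * mu) / q - inner y v) *\<^sub>R v))^2
       = inner ((e - be *\<^sub>R w) - ((al - mu*be)/q) *\<^sub>R v) ((e - be *\<^sub>R w) - ((al - mu*be)/q) *\<^sub>R v)"
    by (simp add: dot_square_norm)
  also have "\<dots> = inner e e - be^2 - ((al - mu*be)/q)^2"
    using vv wv ev ww by (simp add: inner_diff_left inner_diff_right inner_commute be_def power2_eq_square algebra_simps)
  also have "\<dots> = norm (x - xp)^2 - (inner (x - xp) w)^2
     - (inner (x - xp) u - inner u w * inner (x - xp) w)^2 / (1 - (inner u w)^2)"
    using q2 by (simp add: e_def be_def al_def mu_def[symmetric] dot_square_norm power_divide)
  finally show ?thesis unfolding Let_def mu_def[symmetric] q_def[symmetric] y_def[symmetric] v_def[symmetric] by simp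
qed

lemma sum_offdiag:
  fixes F :: "'m::finite \<times> 'm \<Rightarrow> real"
  shows "(\<Sum>p\<in>{(r,s). r\<noteq>s}. F p) = (\<Sum>s\<in>UNIV. \<Sum>r\<in>UNIV. F (r,s)) - (\<Sum>s\<in>UNIV. F (s,s))"
proof -
  have U: "(UNIV :: ('m\<times>'m) set) = {(r,s). r\<noteq>s} \<union> range (\<lambda>s. (s,s))" by auto
  have "(\<Sum>p\<in>UNIV. F p) = (\<Sum>p\<in>{(r,s). r\<noteq>s}. F p) + (\<Sum>p\<in>range (\<lambda>s. (s,s)). F p)"
    unfolding U by (rule sum.union_disjoint) auto
  moreover have "(\<Sum>p\<in>range (\<lambda>s. (s,s)). F p) = (\<Sum>s\<in>UNIV. F (s,s))"
    by (subst sum.reindex) (auto simp: inj_on_def)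
  moreover have "(\<Sum>p\<in>UNIV. F p) = (\<Sum>s\<in>UNIV. \<Sum>r\<in>UNIV. F (r,s))"
  proof -
    have "(\<Sum>s\<in>UNIV. \<Sum>r\<in>UNIV. F (r,s)) = (\<Sum>r\<in>UNIV. \<Sum>s\<in>UNIV. F (r,s))" by (rule sum.swap)
    also have "\<dots> = (\<Sum>(r,s)\<in>UNIV\<times>UNIV. F (r,s))" by (rule sum.cartesian_product)
    finally show ?thesis by (simp add: UNIV_Times_UNIV)
  qed
  ultimately show ?thesis by linarith
qed

lemma card_offdiag: "card {(r,s::'m::finite). r\<noteq>s} = CARD('m) * CARD('m) - CARD('m)"
proof -
  have U: "{(r,s::'m). r\<noteq>s} = UNIV - range (\<lambda>s. (s,s))" by auto
  have "card (range (\<lambda>s::'m. (s,s))) = CARD('m)" by (subst card_image) (auto simp: inj_on_def)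
  thus ?thesis unfolding U by (subst card_Diff_subset) (auto simp: card_cartesian_product UNIV_Times_UNIV[symmetric] simp del: UNIV_Times_UNIV)
qed

lemma pair_ineq:
  fixes mu a b :: real
  assumes "\<bar>mu\<bar> < 1"
  shows "((\<bar>mu\<bar> - mu^2) / sqrt (1 - mu^2))^2 * (a^2 + b^2)
     \<le> mu^2 * (a - mu*b)^2 / (1 - mu^2) + mu^2 * (b - mu*a)^2 / (1 - mu^2)"
proof -
  have m2: "mu^2 < 1" using assms by (simp add: abs_square_less_1)
  hence p: "1 - mu^2 > 0" by simp
  have lhs: "((\<bar>mu\<bar> - mu^2) / sqrt (1 - mu^2))^2 * (a^2 + b^2) = (\<bar>mu\<bar> - mu^2)^2 * (a^2+b^2) / (1 - mu^2)"
    using p by (simp add: power_divide)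
  have key: "(\<bar>mu\<bar> - mu^2)^2 * (a^2+b^2) \<le> mu^2 * (a - mu*b)^2 + mu^2 * (b - mu*a)^2"
  proof (cases "mu \<ge> 0")
    case True
    have "mu^2 * (a - mu*b)^2 + mu^2 * (b - mu*a)^2 - (\<bar>mu\<bar> - mu^2)^2 * (a^2+b^2) = 2*mu^3*(a-b)^2"
      using True by (simp add: power2_eq_square power3_eq_cube algebra_simps)
    moreover have "2*mu^3*(a-b)^2 \<ge> 0" using True by simp
    ultimately show ?thesis by linarith
  next
    case False
    have "mu^2 * (a - mu*b)^2 + mu^2 * (b - mu*a)^2 - (\<bar>mu\<bar> - mu^2)^2 * (a^2+b^2) = -2*mu^3*(a+b)^2"
      using False by (simp add: power2_eq_square power3_eq_cube algebra_simps)
    moreover have "-2*mu^3*(a+b)^2 \<ge> 0" using False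
      by (simp add: mult_nonpos_nonneg zero_le_mult_iff power3_eq_cube mult_le_0_iff)
    ultimately show ?thesis by linarith
  qed
  show ?thesis unfolding lhs using key p by (simp add: divide_right_mono add_divide_distrib[symmetric])
qed

lemma norm_Av_sq: fixes A :: "real^'n^'m" shows "norm (A *v z)^2 = (\<Sum>i\<in>UNIV. (inner (A $ i) z)^2)"
proof -
  have "norm (A *v z)^2 = inner (A *v z) (A *v z)" by (simp add: dot_square_norm)
  also have "\<dots> = (\<Sum>i\<in>UNIV. (A *v z) $ i * (A *v z) $ i)" by (simp only: inner_vec_def inner_real_def)
  also have "\<dots> = (\<Sum>i\<in>UNIV. (inner (A $ i) z)^2)" by (simp only: matrix_vector_mul_component power2_eq_square)
  finally show ?thesis .
qed

lemma inv_norm_prop: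
  fixes A :: "real^'n^'m"
  assumes "inj ((*v) A)"
  shows "inv_norm A * norm (A *v z) \<ge> norm z"
proof -
  let ?M = "{M. \<forall>z. M * norm (A *v z) \<ge> norm z}"
  obtain B where B: "B > 0" "\<And>x. B * norm x \<le> norm (A *v x)"
    using linear_inj_bounded_below_pos[of "(*v) A"] assms by (auto simp: matrix_vector_mul_linear)
  have "\<forall>z. (1/B) * norm (A *v z) \<ge> norm z"
  proof
    fix z show "(1/B) * norm (A *v z) \<ge> norm z" using B(2)[of z] B(1) by (simp add: pos_le_divide_eq mult.commute)
  qed
  hence ne: "?M \<noteq> {}" by blast
  show ?thesis
  proof (cases "A *v z = 0")
    case True
    hence "z = 0" using B(2)[of z] B(1) by (simp add: mult_le_0_iff)
    thus ?thesis by simp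
  next
    case False
    hence np: "norm (A *v z) > 0" by simp
    have "norm z / norm (A *v z) \<le> inv_norm A"
      unfolding inv_norm_def
    proof (rule cInf_greatest[OF ne])
      fix M assume "M \<in> ?M"
      hence "M * norm (A *v z) \<ge> norm z" by simp
      thus "norm z / norm (A *v z) \<le> M" using np by (simp add: divide_le_eq)
    qed
    thus ?thesis using np by (simp add: divide_le_eq)
  qed
qed

theorem lemma2:
  fixes A :: "real^'n^('m::{finite,linorder})" and x xk1 :: "real^'n"
  assumes "CARD('m) > CARD('n)"
    and "rank A = CARD('n)"
    and "\<forall>i. norm (A $ i) = 1"
    and "\<forall>r s. r \<noteq> s \<longrightarrow> \<bar>inner (A $ r) (A $ s)\<bar> < 1"
  shows "measure_pmf.expectation (pmf_of_set {(r, s). r \<noteq> s})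
           (\<lambda>(r, s). (norm (x - tsk_step A (A *v x) xk1 r s))^2)
         \<le> (1 - 1 / scaled_cond A)^2 * (norm (x - xk1))^2
           - 1 / (real (CARD('m))^2 - real (CARD('m))) *
             (\<Sum>(r, s)\<in>{(r, s). r < s}. (Ccoef A r s)^2 *
                ((inner (x - xk1) (A $ r))^2 + (inner (x - xk1) (A $ s))^2))"
proof -
  define m where "m = real CARD('m)"
  define S where "S = {(r::'m, s). r \<noteq> s}"
  define e where "e = x - xk1"
  define al where "al i = inner e (A $ i)" for i
  define mu where "mu r s = inner (A $ r) (A $ s)" for r s
  define K where "K = inv_norm A"
  define h where "h s = e - al s *\<^sub>R (A $ s)" for s
  define Q where "Q = (\<Sum>(r, s)\<in>{(r::'m, s). r < s}. (Ccoef A r s)^2 * ((al r)^2 + (al s)^2))"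
  have inj: "inj ((*v) A)" using assms(2) full_rank_injective by blast
  have Kp: "K * norm (A *v z) \<ge> norm z" for z using inv_norm_prop[OF inj] K_def by simp
  have Ksq: "K^2 * norm (A *v z)^2 \<ge> norm z^2" for z
  proof -
    have "norm z^2 \<le> (K * norm (A *v z))^2" using Kp[of z] by (intro power_mono) auto
    thus ?thesis by (simp add: power_mult_distrib)
  qed
  have unit: "inner (A $ i) (A $ i) = 1" for i using assms(3) by (simp add: dot_square_norm)
  have musym: "mu s r = mu r s" for r s by (simp add: mu_def inner_commute)
  have mu1: "r \<noteq> s \<Longrightarrow> \<bar>mu r s\<bar> < 1" for r s using assms(4) mu_def by simp
  have "CARD('n) > 0" by simp
  hence mge2: "m \<ge> 2" using assms(1) unfolding m_def by linarith
  have frob: "frob_sq A = m"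
  proof -
    have "frob_sq A = (\<Sum>i\<in>UNIV. inner (A $ i) (A $ i))"
      by (simp add: frob_sq_def inner_vec_def power2_eq_square)
    thus ?thesis using unit by (simp add: m_def)
  qed
  have R: "scaled_cond A = m * K^2" by (simp add: scaled_cond_def frob K_def)
  obtain j :: 'n where True by simp
  have "K^2 * norm (A *v axis j 1)^2 \<ge> 1" using Ksq[of "axis j 1"] by simp
  moreover have "norm (A *v axis j 1)^2 \<le> m"
  proof -
    have "norm (A *v axis j 1)^2 = (\<Sum>i\<in>UNIV. (inner (A $ i) (axis j 1))^2)" by (rule norm_Av_sq)
    also have "\<dots> \<le> (\<Sum>i\<in>(UNIV::'m set). (1::real))"
    proof -
      have pw: "(inner (A $ i) (axis j 1))^2 \<le> 1" for i
      proof -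
        have "\<bar>inner (A $ i) (axis j 1)\<bar> \<le> norm (A $ i) * norm (axis j (1::real))"
          by (rule Cauchy_Schwarz_ineq2)
        hence "\<bar>inner (A $ i) (axis j 1)\<bar> \<le> 1" using assms(3) by simp
        thus ?thesis by (simp add: abs_square_le_1)
      qed
      show ?thesis by (intro sum_mono pw)
    qed
    finally show ?thesis by (simp add: m_def)
  qed
  ultimately have Rge1: "m * K^2 \<ge> 1"
    by (smt (verit) mult_left_mono mult.commute zero_le_power2)
  define t where "t = 1 - 1 / (m * K^2)"
  have t0: "t \<ge> 0" using Rge1 by (simp add: t_def)
  have Rpos: "m * K^2 > 0" using Rge1 by simp
  have Kpos: "K^2 > 0" using Rpos mge2 by (simp add: zero_less_mult_iff)
  have g: "norm (x - tsk_step A (A *v x) xk1 r s)^2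
           = norm e^2 - (al s)^2 - (al r - mu r s * al s)^2 / (1 - (mu r s)^2)" if "r \<noteq> s" for r s
  proof -
    have "tsk_step A (A *v x) xk1 r s =
      (let mu = inner (A $ r) (A $ s);
         y = xk1 + (inner (A $ s) x - inner xk1 (A $ s)) *\<^sub>R (A $ s);
         v = (1 / sqrt (1 - mu^2)) *\<^sub>R (A $ r - mu *\<^sub>R (A $ s));
         beta = (inner (A $ r) x - inner (A $ s) x * mu) / sqrt (1 - mu^2)
     in y + (beta - inner y v) *\<^sub>R v)"
      by (simp only: tsk_step_def matrix_vector_mul_component)
    then show ?thesis
      using step_gen[of "A $ r" "A $ s" x xk1] assms(3) mu1[OF that]
      by (simp add: e_def al_def mu_def)
  qed
  define P1 where "P1 = (\<Sum>p\<in>S. norm e^2 - (al (snd p))^2 - (al (fst p) - mu (fst p) (snd p) * al (snd p))^2)"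
  have hn: "norm (h s)^2 = norm e^2 - (al s)^2" for s
  proof -
    have "norm (h s)^2 = inner (h s) (h s)" by (simp add: dot_square_norm)
    also have "\<dots> = inner e e - (al s)^2"
      unfolding h_def using unit[of s]
      by (simp add: inner_diff_left inner_diff_right al_def inner_commute power2_eq_square)
    also have "\<dots> = norm e^2 - (al s)^2" by (simp add: dot_square_norm)
    finally show ?thesis .
  qed
  have hi: "inner (h s) (A $ r) = al r - mu r s * al s" for r s
    unfolding h_def by (simp add: inner_diff_left al_def mu_def inner_commute[of "A $ s" "A $ r"])
  have hi': "inner (A $ r) (h s) = al r - mu r s * al s" for r s using hi[of s r] by (simp add: inner_commute)
  have mus: "mu s s = 1" for s using unit by (simp add: mu_def)
  have P1eq: "P1 = (\<Sum>s\<in>UNIV. (m - 1) * norm (h s)^2 - norm (A *v h s)^2)"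
  proof -
    have "P1 = (\<Sum>s\<in>UNIV. \<Sum>r\<in>UNIV. norm (h s)^2 - (inner (h s) (A $ r))^2)
             - (\<Sum>s\<in>UNIV. norm (h s)^2 - (inner (h s) (A $ s))^2)"
      unfolding P1_def S_def
      by (subst sum_offdiag) (simp add: hn hi)
    also have "\<dots> = (\<Sum>s\<in>UNIV. m * norm (h s)^2 - norm (A *v h s)^2) - (\<Sum>s\<in>UNIV. norm (h s)^2)"
      using unit by (simp add: hi hi' mus sum_subtractf norm_Av_sq m_def)
    also have "\<dots> = (\<Sum>s\<in>UNIV. (m - 1) * norm (h s)^2 - norm (A *v h s)^2)"
      by (simp add: sum_subtractf[symmetric] algebra_simps)
    finally show ?thesis .
  qed
  have P1le: "P1 \<le> (m*m - m) * t^2 * norm e^2"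
  proof -
    have step1: "(m - 1) * norm (h s)^2 - norm (A *v h s)^2 \<le> (m - 1) * t * norm (h s)^2" for s
    proof -
      have "norm (A *v h s)^2 \<ge> norm (h s)^2 / K^2" using Ksq[of "h s"] Kpos by (simp add: divide_le_eq mult.commute)
      moreover have "norm (h s)^2 / K^2 \<ge> (m - 1) * (norm (h s)^2 / (m * K^2))"
      proof -
        have "(m - 1) * (norm (h s)^2 / (m * K^2)) = ((m - 1) / m) * (norm (h s)^2 / K^2)"
          using mge2 Kpos by (simp add: field_simps)
        also have "\<dots> \<le> 1 * (norm (h s)^2 / K^2)"
          using mge2 by (intro mult_right_mono) auto
        finally show ?thesis by simp
      qed
      moreover have "(m - 1) * t * norm (h s)^2 = (m - 1) * norm (h s)^2 - (m - 1) * (norm (h s)^2 / (m * K^2))"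
        unfolding t_def by (simp add: algebra_simps)
      ultimately show ?thesis by linarith
    qed
    have sumh: "(\<Sum>s\<in>UNIV. norm (h s)^2) \<le> m * t * norm e^2"
    proof -
      have "(\<Sum>s\<in>UNIV. norm (h s)^2) = m * norm e^2 - norm (A *v e)^2"
        by (simp add: hn sum_subtractf norm_Av_sq m_def al_def inner_commute)
      moreover have "norm (A *v e)^2 \<ge> norm e^2 / K^2" using Ksq[of e] Kpos by (simp add: divide_le_eq mult.commute)
      moreover have "m * t * norm e^2 = m * norm e^2 - norm e^2 / K^2"
        unfolding t_def using mge2 by (simp add: field_simps)
      ultimately show ?thesis by linarith
    qed
    have "P1 \<le> (\<Sum>s\<in>UNIV. (m - 1) * t * norm (h s)^2)" unfolding P1eq by (rule sum_mono) (rule step1)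
    also have "\<dots> = (m - 1) * t * (\<Sum>s\<in>UNIV. norm (h s)^2)" by (simp add: sum_distrib_left)
    also have "\<dots> \<le> (m - 1) * t * (m * t * norm e^2)"
      using sumh mge2 t0 by (intro mult_left_mono) auto
    also have "\<dots> = (m*m - m) * t^2 * norm e^2" by (simp add: power2_eq_square algebra_simps)
    finally show ?thesis .
  qed
  define G where "G r s = (mu r s)^2 * (al r - mu r s * al s)^2 / (1 - (mu r s)^2)" for r s
  define P2 where "P2 = (\<Sum>p\<in>S. G (fst p) (snd p))"
  have P2ge: "P2 \<ge> Q"
  proof -
    have Sd: "S = {(r, s). r < s} \<union> {(r, s). s < r}" unfolding S_def by (auto simp: neq_iff)
    have "P2 = (\<Sum>p\<in>{(r::'m, s). r < s}. G (fst p) (snd p)) + (\<Sum>p\<in>{(r::'m, s). s < r}. G (fst p) (snd p))"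
      unfolding P2_def Sd by (rule sum.union_disjoint) auto
    moreover have "(\<Sum>p\<in>{(r::'m, s). s < r}. G (fst p) (snd p)) = (\<Sum>p\<in>{(r::'m, s). r < s}. G (snd p) (fst p))"
    proof -
      have im: "{(r::'m, s). s < r} = prod.swap ` {(r, s). r < s}" by auto
      show ?thesis unfolding im by (subst sum.reindex) (auto simp: inj_on_def)
    qed
    ultimately have "P2 = (\<Sum>p\<in>{(r::'m, s). r < s}. G (fst p) (snd p) + G (snd p) (fst p))"
      by (simp add: sum.distrib)
    moreover have "Q \<le> (\<Sum>p\<in>{(r::'m, s). r < s}. G (fst p) (snd p) + G (snd p) (fst p))"
      unfolding Q_def
    proof (rule sum_mono)
      fix p assume "p \<in> {(r::'m, s). r < s}"
      then obtain r s where p: "p = (r,s)" "r < s" by auto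
      hence "r \<noteq> s" by simp
      from pair_ineq[OF mu1[OF this], of "al r" "al s"]
      show "(case p of (r, s) \<Rightarrow> (Ccoef A r s)^2 * ((al r)^2 + (al s)^2)) \<le> G (fst p) (snd p) + G (snd p) (fst p)"
        using p by (simp add: G_def Ccoef_def mu_def[symmetric] musym Let_def)
    qed
    ultimately show ?thesis by simp
  qed
  have fin: "finite S" by simp
  have cardS: "real (card S) = m*m - m"
    unfolding S_def card_offdiag m_def by (simp add: of_nat_diff)
  have Dpos: "m*m - m > 0" using mge2 by (simp add: algebra_simps)
  have nonempty: "S \<noteq> {}" using Dpos cardS by auto
  have sumg: "(\<Sum>p\<in>S. (\<lambda>(r, s). (norm (x - tsk_step A (A *v x) xk1 r s))^2) p) = P1 - P2"
  proof -
    have "(\<Sum>p\<in>S. (\<lambda>(r, s). (norm (x - tsk_step A (A *v x) xk1 r s))^2) p)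
        = (\<Sum>p\<in>S. (norm e^2 - (al (snd p))^2 - (al (fst p) - mu (fst p) (snd p) * al (snd p))^2) - G (fst p) (snd p))"
    proof (rule sum.cong[OF refl])
      fix p assume "p \<in> S"
      then obtain r s where p: "p = (r,s)" "r \<noteq> s" by (auto simp: S_def)
      have q: "1 - (mu r s)^2 > 0" using mu1[OF p(2)] by (simp add: abs_square_less_1)
      have "(al r - mu r s * al s)^2 / (1 - (mu r s)^2) = (al r - mu r s * al s)^2 + G r s"
        unfolding G_def using q by (simp add: field_simps)
      thus "(\<lambda>(r, s). (norm (x - tsk_step A (A *v x) xk1 r s))^2) p
          = (norm e^2 - (al (snd p))^2 - (al (fst p) - mu (fst p) (snd p) * al (snd p))^2) - G (fst p) (snd p)"
        using g[OF p(2)] p by simp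
    qed
    thus ?thesis unfolding P1_def P2_def by (simp add: sum_subtractf)
  qed
  have E: "measure_pmf.expectation (pmf_of_set S) (\<lambda>(r, s). (norm (x - tsk_step A (A *v x) xk1 r s))^2)
        = (P1 - P2) / (m*m - m)"
    using integral_pmf_of_set[OF nonempty fin] sumg cardS by simp
  have "(P1 - P2) / (m*m - m) \<le> ((m*m - m) * t^2 * norm e^2 - Q) / (m*m - m)"
    using P1le P2ge Dpos by (intro divide_right_mono) auto
  also have "\<dots> = t^2 * norm e^2 - 1 / (m^2 - m) * Q"
  proof -
    have Dne: "m*m - m \<noteq> 0" using Dpos by linarith
    have "((m*m - m) * t^2 * norm e^2 - Q) / (m*m - m) = (m*m - m) * (t^2 * norm e^2) / (m*m - m) - Q / (m*m - m)"
      by (simp add: diff_divide_distrib mult.assoc)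
    also have "\<dots> = t^2 * norm e^2 - Q / (m*m - m)" using Dne by simp
    finally show ?thesis by (simp add: power2_eq_square)
  qed
  finally show ?thesis
    using E R unfolding S_def t_def e_def Q_def al_def m_def by simp
qed

end
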